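(* Let $H$ be a set of $n$ objects with an associated decomposition scheme of combinatorial dimension $b$ that complies with the Clarkson–Shor framework. Assume its local growth function satisfies $u(m)\le 2^\alpha m^\beta$ for all $m$, for some real $\alpha$ and some $\beta\ge 1$. Let $R$ be a $\rho$-sample from $H$ with $\rho\ge 4b$, and let $\ell>1$. Let $\mathcal{CD}_{\ge \ell}(R)$ denote the set of $\ell$-heavy cells of $\mathcal{CD}(R)$. Then $$\mathbb{E}\bigl[\,|\mathcal{CD}_{\ge\ell}(R)|\,\bigr]\ \le\ 3^b\,2^{\alpha-\beta}\rho^\beta e^{-\ell/2}.$$
   Context: Clarkson–Shor framework. $H$ is a finite set of objects embedded in some space $E$. Every subset $I\subseteq H$ determines a set $\mathcal{CD}(I)$ of cells, which are subsets of $E$. Combinatorial dimension: there is an integer $b>0$ such that for every $I\subseteq H$ and every $\sigma\in\mathcal{CD}(I)$ there is $J\subseteq I$ with $|J|\le b$ and $\sigma\in\mathcal{CD}(J)$. A smallest such $J$ is a defining set $D(\sigma)$ of $\sigma$; it need not be unique, and any choice may be used. The least such $b$ is the combinatorial dimension. Conflict list: an object $f\in H$ conflicts with $\sigma$ if $\sigma\notin\mathcal{CD}(D(\sigma)\cup\{f\})$. The conflict list $K(\sigma)$ is the set of objects of $H$ that conflict with $\sigma$; always $D(\sigma)\cap K(\sigma)=\emptyset$. Compliance with the framework means both axioms hold: (i) for every $R\subseteq H$ and every $\sigma\in\mathcal{CD}(R)$, some defining set $D(\sigma)$ satisfies $D(\sigma)\subseteq R$, and $K(\sigma)\cap R=\emptyset$;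 (ii) for every $R\subseteq H$, if $D(\sigma)\subseteq R$ for some defining set of $\sigma$ and $K(\sigma)\cap R=\emptyset$, then $\sigma\in\mathcal{CD}(R)$. Local growth function: $u(m)=\max_{I\subseteq H,\,|I|=m}|\mathcal{CD}(I)|$. A $\rho$-sample is the set of elements obtained by $\rho$ independent uniform draws from $H$, with repetition. For a fixed $\rho$, a cell $\sigma$ is $\ell$-heavy if $|K(\sigma)|\ge \ell n/\rho$, where $n=|H|$. *)

theory Defs
  imports "HOL-Probability.Probability"
begin

definition is_defining_set :: "'h set \<Rightarrow> ('h set \<Rightarrow> 'c set) \<Rightarrow> 'c \<Rightarrow> 'h set \<Rightarrow> bool" where
  "is_defining_set H CD \<sigma> J \<longleftrightarrow>
     J \<subseteq> H \<and> \<sigma> \<in> CD J \<and> (\<forall>J'. J' \<subseteq> H \<and> \<sigma> \<in> CD J' \<longrightarrow> card J \<le> card J')"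

definition has_dim_bound :: "'h set \<Rightarrow> ('h set \<Rightarrow> 'c set) \<Rightarrow> nat \<Rightarrow> bool" where
  "has_dim_bound H CD b \<longleftrightarrow> b > 0 \<and>
     (\<forall>I. I \<subseteq> H \<longrightarrow> (\<forall>\<sigma>\<in>CD I. \<exists>J. J \<subseteq> I \<and> card J \<le> b \<and> \<sigma> \<in> CD J))"

definition comb_dim :: "'h set \<Rightarrow> ('h set \<Rightarrow> 'c set) \<Rightarrow> nat \<Rightarrow> bool" where
  "comb_dim H CD b \<longleftrightarrow> has_dim_bound H CD b \<and> (\<forall>b'. has_dim_bound H CD b' \<longrightarrow> b \<le> b')"

text \<open>D is a (fixed, arbitrary) choice of a defining set for each cell.\<close>
definition valid_defining_choice :: "'h set \<Rightarrow> ('h set \<Rightarrow> 'c set) \<Rightarrow> ('c \<Rightarrow> 'h set) \<Rightarrow> bool" where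
  "valid_defining_choice H CD D \<longleftrightarrow>
     (\<forall>I. I \<subseteq> H \<longrightarrow> (\<forall>\<sigma>\<in>CD I. is_defining_set H CD \<sigma> (D \<sigma>)))"

definition conflict_list :: "'h set \<Rightarrow> ('h set \<Rightarrow> 'c set) \<Rightarrow> ('c \<Rightarrow> 'h set) \<Rightarrow> 'c \<Rightarrow> 'h set" where
  "conflict_list H CD D \<sigma> = {f \<in> H. \<sigma> \<notin> CD (D \<sigma> \<union> {f})}"

definition complies_CS :: "'h set \<Rightarrow> ('h set \<Rightarrow> 'c set) \<Rightarrow> ('c \<Rightarrow> 'h set) \<Rightarrow> bool" where
  "complies_CS H CD D \<longleftrightarrow>
     (\<forall>R. R \<subseteq> H \<longrightarrow> (\<forall>\<sigma>\<in>CD R.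
        (\<exists>J. is_defining_set H CD \<sigma> J \<and> J \<subseteq> R) \<and> conflict_list H CD D \<sigma> \<inter> R = {})) \<and>
     (\<forall>R \<sigma>. R \<subseteq> H \<longrightarrow>
        (\<exists>J. is_defining_set H CD \<sigma> J \<and> J \<subseteq> R) \<and> conflict_list H CD D \<sigma> \<inter> R = {}
        \<longrightarrow> \<sigma> \<in> CD R)"

definition local_growth :: "'h set \<Rightarrow> ('h set \<Rightarrow> 'c set) \<Rightarrow> nat \<Rightarrow> nat" where
  "local_growth H CD m = Max {card (CD I) | I. I \<subseteq> H \<and> card I = m}"

definition rho_sample :: "'h set \<Rightarrow> nat \<Rightarrow> 'h set pmf" where
  "rho_sample H \<rho> = map_pmf set (replicate_pmf \<rho> (pmf_of_set H))"

definition heavy_cells ::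
  "'h set \<Rightarrow> ('h set \<Rightarrow> 'c set) \<Rightarrow> ('c \<Rightarrow> 'h set) \<Rightarrow> nat \<Rightarrow> real \<Rightarrow> 'h set \<Rightarrow> 'c set" where
  "heavy_cells H CD D \<rho> l R =
     {\<sigma> \<in> CD R. real (card (conflict_list H CD D \<sigma>)) \<ge> l * real (card H) / real \<rho>}"

end

theory Submission
  imports Defs
begin



lemma rep_pmf_of_set:
  assumes "finite H" "H \<noteq> {}"
  shows "replicate_pmf n (pmf_of_set H) = pmf_of_set {xs. set xs \<subseteq> H \<and> length xs = n}"
proof (induction n)
  case 0
  have "{xs. set xs \<subseteq> H \<and> length xs = 0} = {[]}" by auto
  then show ?case by (simp only: replicate_pmf.simps pmf_of_set_singleton)
next
  case (Suc n)
  let ?L = "\<lambda>n. {xs. set xs \<subseteq> H \<and> length xs = n}"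
  have fin: "finite (?L m)" for m using assms(1) by (simp add: finite_lists_length_eq)
  have ne: "?L m \<noteq> {}" for m
  proof -
    obtain h where "h \<in> H" using assms(2) by auto
    then have "replicate m h \<in> ?L m" by auto
    then show ?thesis by blast
  qed
  have "replicate_pmf (Suc n) (pmf_of_set H) = map_pmf (\<lambda>(x,xs). x#xs) (pair_pmf (pmf_of_set H) (pmf_of_set (?L n)))"
    by (simp add: Suc pair_pmf_def map_bind_pmf bind_return_pmf map_pmf_def bind_assoc_pmf)
  also have "pair_pmf (pmf_of_set H) (pmf_of_set (?L n)) = pmf_of_set (H \<times> ?L n)"
  proof (rule pmf_eqI)
    fix z :: "'a \<times> 'a list"
    show "pmf (pair_pmf (pmf_of_set H) (pmf_of_set (?L n))) z = pmf (pmf_of_set (H \<times> ?L n)) z"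
      using assms fin ne by (cases z) (simp add: pmf_pair card_cartesian_product indicator_def)
  qed
  also have "map_pmf (\<lambda>(x,xs). x#xs) (pmf_of_set (H \<times> ?L n)) = pmf_of_set ((\<lambda>(x,xs). x#xs) ` (H \<times> ?L n))"
    using assms fin ne by (intro map_pmf_of_set_inj) (auto simp: inj_on_def)
  also have "(\<lambda>(x,xs). x#xs) ` (H \<times> ?L n) = ?L (Suc n)"
    by (auto simp: length_Suc_conv image_iff)
  finally show ?case .
qed



lemma card_filter_sum: "finite B \<Longrightarrow> card {b\<in>B. P b} = (\<Sum>b\<in>B. if P b then 1 else 0)"
  by (simp add: sum.If_cases Int_def)

lemma double_count:
  assumes "finite A" "finite B"
  shows "(\<Sum>a\<in>A. card {b\<in>B. P a b}) = (\<Sum>b\<in>B. card {a\<in>A. P a b})"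
proof -
  have "(\<Sum>a\<in>A. card {b\<in>B. P a b}) = (\<Sum>a\<in>A. \<Sum>b\<in>B. if P a b then 1 else 0)"
    using assms by (simp only: card_filter_sum)
  also have "\<dots> = (\<Sum>b\<in>B. \<Sum>a\<in>A. if P a b then 1 else 0)" by (rule sum.swap)
  also have "\<dots> = (\<Sum>b\<in>B. card {a\<in>A. P a b})"
    using assms by (simp only: card_filter_sum)
  finally show ?thesis .
qed

definition NN :: "('h set \<Rightarrow> bool) \<Rightarrow> 'h set \<Rightarrow> 'i set \<Rightarrow> nat" where
  "NN Q M T = card {g \<in> PiE T (\<lambda>_. M). Q (g ` T)}"

lemma NN_invariant:
  assumes "finite T" "finite T'" "card T' = card T"
  shows "NN Q M T = NN Q M T'"
proof -
  obtain h where h: "bij_betw h T' T" using finite_same_card_bij assms by metis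
  let ?h' = "inv_into T' h"
  have h': "bij_betw ?h' T T'" using h by (rule bij_betw_inv_into)
  show ?thesis unfolding NN_def
  proof (rule bij_betw_same_card[of "\<lambda>g. restrict (g \<circ> h) T'"], rule bij_betw_byWitness[where f'="\<lambda>g. restrict (g \<circ> ?h') T"])
    show "\<forall>a\<in>{g \<in> T \<rightarrow>\<^sub>E M. Q (g ` T)}. restrict (restrict (a \<circ> h) T' \<circ> inv_into T' h) T = a"
    proof
      fix a assume a: "a \<in> {g \<in> T \<rightarrow>\<^sub>E M. Q (g ` T)}"
      show "restrict (restrict (a \<circ> h) T' \<circ> inv_into T' h) T = a"
      proof
        fix x show "restrict (restrict (a \<circ> h) T' \<circ> inv_into T' h) T x = a x"
          using a h h' by (cases "x \<in> T") (auto simp: bij_betw_def f_inv_into_f inv_into_into PiE_def extensional_def)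
      qed
    qed
    show "\<forall>a'\<in>{g \<in> T' \<rightarrow>\<^sub>E M. Q (g ` T')}. restrict (restrict (a' \<circ> inv_into T' h) T \<circ> h) T' = a'"
    proof
      fix a assume a: "a \<in> {g \<in> T' \<rightarrow>\<^sub>E M. Q (g ` T')}"
      show "restrict (restrict (a \<circ> inv_into T' h) T \<circ> h) T' = a"
      proof
        fix x show "restrict (restrict (a \<circ> inv_into T' h) T \<circ> h) T' x = a x"
          using a h by (cases "x \<in> T'") (auto simp: bij_betw_def inv_into_f_f PiE_def extensional_def)
      qed
    qed
    have im1: "(a \<circ> h) ` T' = a ` T" for a :: "_ \<Rightarrow> 'h" using bij_betw_imp_surj_on[OF h] by (metis image_comp)
    have im2: "(a \<circ> ?h') ` T = a ` T'" for a :: "_ \<Rightarrow> 'h" using bij_betw_imp_surj_on[OF h'] by (metis image_comp)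
    show "(\<lambda>g. restrict (g \<circ> h) T') ` {g \<in> T \<rightarrow>\<^sub>E M. Q (g ` T)} \<subseteq> {g \<in> T' \<rightarrow>\<^sub>E M. Q (g ` T')}"
    proof
      fix x assume "x \<in> (\<lambda>g. restrict (g \<circ> h) T') ` {g \<in> T \<rightarrow>\<^sub>E M. Q (g ` T)}"
      then obtain g where g: "g \<in> T \<rightarrow>\<^sub>E M" "Q (g ` T)" and x: "x = restrict (g \<circ> h) T'" by blast
      have "restrict (g \<circ> h) T' \<in> T' \<rightarrow>\<^sub>E M" using h g by (auto simp: bij_betw_def)
      moreover have "restrict (g \<circ> h) T' ` T' = g ` T" using im1[of g] by (simp add: image_def)
      ultimately show "x \<in> {g \<in> T' \<rightarrow>\<^sub>E M. Q (g ` T')}" using g x by simp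
    qed
    show "(\<lambda>g. restrict (g \<circ> ?h') T) ` {g \<in> T' \<rightarrow>\<^sub>E M. Q (g ` T')} \<subseteq> {g \<in> T \<rightarrow>\<^sub>E M. Q (g ` T)}"
    proof
      fix x assume "x \<in> (\<lambda>g. restrict (g \<circ> ?h') T) ` {g \<in> T' \<rightarrow>\<^sub>E M. Q (g ` T')}"
      then obtain g where g: "g \<in> T' \<rightarrow>\<^sub>E M" "Q (g ` T')" and x: "x = restrict (g \<circ> ?h') T" by blast
      have "restrict (g \<circ> ?h') T \<in> T \<rightarrow>\<^sub>E M" using h' g by (auto simp: bij_betw_def PiE_iff)
      moreover have "restrict (g \<circ> ?h') T ` T = g ` T'" using im2[of g] by (simp add: image_def)
      ultimately show "x \<in> {g \<in> T \<rightarrow>\<^sub>E M. Q (g ` T)}" using g x by simp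
    qed
  qed
qed

lemma NN_split:
  assumes "finite I" "T \<subseteq> I"
  shows "card {f \<in> PiE I (\<lambda>_. M). Q (f ` T)} = NN Q M T * card M ^ card (I - T)"
proof -
  have fT: "finite T" using assms finite_subset by blast
  let ?A = "{g \<in> PiE T (\<lambda>_. M). Q (g ` T)}"
  let ?B = "PiE (I - T) (\<lambda>_. M)"
  have "card {f \<in> PiE I (\<lambda>_. M). Q (f ` T)} = card (?A \<times> ?B)"
  proof (rule bij_betw_same_card[of "\<lambda>f. (restrict f T, restrict f (I - T))"],
         rule bij_betw_byWitness[where f'="\<lambda>(g,h). (\<lambda>i. if i \<in> T then g i else h i)"])
    show "\<forall>a\<in>{f \<in> I \<rightarrow>\<^sub>E M. Q (f ` T)}.
       (case (restrict a T, restrict a (I - T)) of (g, h) \<Rightarrow> \<lambda>i. if i \<in> T then g i else h i) = a"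
      using assms by (auto simp: fun_eq_iff PiE_def extensional_def)
    show "\<forall>a'\<in>?A \<times> ?B. (restrict (case a' of (g, h) \<Rightarrow> \<lambda>i. if i \<in> T then g i else h i) T,
              restrict (case a' of (g, h) \<Rightarrow> \<lambda>i. if i \<in> T then g i else h i) (I - T)) = a'"
      using assms by (auto simp: fun_eq_iff PiE_def extensional_def)
    have r: "restrict f T ` T = f ` T" for f :: "_ \<Rightarrow> 'a" by auto
    show "(\<lambda>f. (restrict f T, restrict f (I - T))) ` {f \<in> I \<rightarrow>\<^sub>E M. Q (f ` T)} \<subseteq> ?A \<times> ?B"
      using assms by (auto simp: r)
    have r2: "(\<lambda>i. if i \<in> T then g i else h i) ` T = g ` T" for g h :: "_ \<Rightarrow> 'a" by auto
    show "(\<lambda>(g, h). \<lambda>i. if i \<in> T then g i else h i) ` (?A \<times> ?B) \<subseteq> {f \<in> I \<rightarrow>\<^sub>E M. Q (f ` T)}"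
      using assms by (auto simp: r2 PiE_def extensional_def)
  qed
  also have "\<dots> = NN Q M T * card M ^ card (I - T)"
    using assms by (simp add: card_cartesian_product NN_def card_PiE)
  finally show ?thesis .
qed

lemma card_subsets_containing:
  assumes "finite I" "U \<subseteq> I" "card U \<le> k"
  shows "card {T. T \<subseteq> I \<and> card T = k \<and> U \<subseteq> T} = (card I - card U) choose (k - card U)"
proof -
  have fU: "finite U" using assms finite_subset by blast
  have "card {T. T \<subseteq> I \<and> card T = k \<and> U \<subseteq> T} = card {V. V \<subseteq> I - U \<and> card V = k - card U}"
  proof (rule bij_betw_same_card[of "\<lambda>T. T - U"], rule bij_betw_byWitness[where f'="\<lambda>V. V \<union> U"])
    show "\<forall>a\<in>{T. T \<subseteq> I \<and> card T = k \<and> U \<subseteq> T}. a - U \<union> U = a" by auto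
    show "\<forall>a'\<in>{V. V \<subseteq> I - U \<and> card V = k - card U}. a' \<union> U - U = a'" by auto
    show "(\<lambda>T. T - U) ` {T. T \<subseteq> I \<and> card T = k \<and> U \<subseteq> T} \<subseteq> {V. V \<subseteq> I - U \<and> card V = k - card U}"
      using assms fU by (auto simp: card_Diff_subset)
    show "(\<lambda>V. V \<union> U) ` {V. V \<subseteq> I - U \<and> card V = k - card U} \<subseteq> {T. T \<subseteq> I \<and> card T = k \<and> U \<subseteq> T}"
    proof safe
      fix V assume V: "V \<subseteq> I - U" "card (V) = k - card U"
      have "finite V" using V assms finite_subset by (metis finite_Diff)
      then have "card (V \<union> U) = card V + card U" using V fU by (intro card_Un_disjoint) auto
      then show "card (V \<union> U) = k" using V assms by simp
    qed (use assms in auto)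
  qed
  also have "\<dots> = (card I - card U) choose (k - card U)"
    using assms by (simp add: n_subsets card_Diff_subset fU)
  finally show ?thesis .
qed

lemma choose_step3:
  assumes "N + 1 \<le> 3 * (K + 1)"
  shows "(Suc N choose Suc K) \<le> 3 * (N choose K)"
proof -
  have "(Suc N choose Suc K) * Suc K = Suc N * (N choose K)" using Suc_times_binomial_eq by metis
  also have "\<dots> \<le> 3 * Suc K * (N choose K)" using assms by (intro mult_right_mono) auto
  finally show ?thesis by (metis mult.assoc mult.commute mult_le_cancel2 zero_less_Suc)
qed

lemma choose_ratio:
  assumes "d \<le> k" "k \<le> \<rho>" "\<forall>i<d. \<rho> + 2 * i \<le> 3 * k"
  shows "(\<rho> choose k) \<le> 3 ^ d * ((\<rho> - d) choose (k - d))"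
  using assms
proof (induction d)
  case 0 then show ?case by simp
next
  case (Suc d)
  have IH: "(\<rho> choose k) \<le> 3 ^ d * ((\<rho> - d) choose (k - d))" using Suc by auto
  have "\<rho> + 2 * d \<le> 3 * k" using Suc by auto
  then have st: "((\<rho> - Suc d) + 1) \<le> 3 * ((k - Suc d) + 1)" using Suc by auto
  have e1: "\<rho> - d = Suc (\<rho> - Suc d)" "k - d = Suc (k - Suc d)" using Suc by auto
  have "((\<rho> - d) choose (k - d)) \<le> 3 * ((\<rho> - Suc d) choose (k - Suc d))"
    unfolding e1 by (rule choose_step3[OF st])
  then show ?case using IH by (simp add: mult_le_mono2 order_trans)
qed

lemma subsample:
  fixes Q :: "'h set \<Rightarrow> bool" and I :: "'i set" and S :: "'j set"
  assumes fI: "finite I" and fM: "finite M" and cI: "card I = \<rho>" and kr: "k \<le> \<rho>"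
    and up: "\<forall>f\<in>PiE I (\<lambda>_. M). Q (f ` I) \<longrightarrow> (\<exists>J. J \<subseteq> f ` I \<and> card J \<le> b \<and> (\<forall>R. J \<subseteq> R \<longrightarrow> Q R))"
    and ratio: "\<forall>d\<le>b. (\<rho> choose k) \<le> 3^b * ((\<rho>-d) choose (k-d))"
    and bk: "b \<le> k" and fS: "finite S" and cS: "card S = k"
  shows "card {f\<in>PiE I (\<lambda>_. M). Q (f ` I)} \<le> 3^b * NN Q M S * card M ^ (\<rho>-k)"
proof -
  define Tk where "Tk = {T. T \<subseteq> I \<and> card T = k}"
  define P where "P = PiE I (\<lambda>_. M)"
  define G where "G = {f\<in>P. Q (f ` I)}"
  have fTk: "finite Tk" using finite_subset[of Tk "Pow I"] fI unfolding Tk_def by auto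
  have fP: "finite P" unfolding P_def using fI fM by (simp add: finite_PiE)
  have fG: "finite G" unfolding G_def using fP by simp
  have cTk: "card Tk = \<rho> choose k" unfolding Tk_def using fI cI n_subsets by blast
  have termT: "card {f\<in>P. Q (f ` T)} = NN Q M S * card M ^ (\<rho>-k)" if "T \<in> Tk" for T
  proof -
    have T: "T \<subseteq> I" "card T = k" using that Tk_def by auto
    have fT: "finite T" using T fI finite_subset by blast
    have "card {f\<in>P. Q (f ` T)} = NN Q M T * card M ^ card (I - T)"
      unfolding P_def using NN_split[OF fI T(1)] .
    also have "NN Q M T = NN Q M S" using NN_invariant[OF fS fT] T cS by metis
    also have "card (I - T) = \<rho> - k" using T fT cI by (simp add: card_Diff_subset)
    finally show ?thesis .
  qed
  have sumT: "(\<Sum>T\<in>Tk. card {f\<in>P. Q (f ` T)}) = (\<rho> choose k) * (NN Q M S * card M ^ (\<rho>-k))"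
  proof -
    have "(\<Sum>T\<in>Tk. card {f\<in>P. Q (f ` T)}) = (\<Sum>T\<in>Tk. NN Q M S * card M ^ (\<rho>-k))"
      by (rule sum.cong[OF refl termT])
    also have "\<dots> = card Tk * (NN Q M S * card M ^ (\<rho>-k))" by simp
    finally show ?thesis unfolding cTk .
  qed
  have dc: "(\<Sum>T\<in>Tk. card {f\<in>P. Q (f ` T)}) = (\<Sum>f\<in>P. card {T\<in>Tk. Q (f ` T)})"
    using double_count[OF fTk fP] .
  have lb: "(\<rho> choose k) \<le> 3^b * card {T\<in>Tk. Q (f ` T)}" if f: "f \<in> G" for f
  proof -
    from f have fP': "f \<in> P" and Qf: "Q (f ` I)" unfolding G_def by auto
    have "\<exists>J. J \<subseteq> f ` I \<and> card J \<le> b \<and> (\<forall>R. J \<subseteq> R \<longrightarrow> Q R)"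
      using up fP' Qf unfolding P_def by simp
    then obtain J where J: "J \<subseteq> f ` I" "card J \<le> b" "\<forall>R. J \<subseteq> R \<longrightarrow> Q R"
      by blast
    obtain U where U: "U \<subseteq> I" "inj_on f U" "J = f ` U" using subset_image_inj[THEN iffD1, OF J(1)] by blast
    have cU: "card U = card J" using U card_image by metis
    have sub: "{T. T \<subseteq> I \<and> card T = k \<and> U \<subseteq> T} \<subseteq> {T\<in>Tk. Q (f ` T)}"
    proof
      fix T assume T: "T \<in> {T. T \<subseteq> I \<and> card T = k \<and> U \<subseteq> T}"
      then have "f ` U \<subseteq> f ` T" by (intro image_mono) auto
      then have "Q (f ` T)" using J(3) U(3) by auto
      then show "T \<in> {T\<in>Tk. Q (f ` T)}" using T unfolding Tk_def by auto
    qed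
    have e: "card {T. T \<subseteq> I \<and> card T = k \<and> U \<subseteq> T} = (\<rho> - card U) choose (k - card U)"
      using card_subsets_containing[OF fI U(1)] cU J(2) bk cI by simp
    have m: "card {T. T \<subseteq> I \<and> card T = k \<and> U \<subseteq> T} \<le> card {T\<in>Tk. Q (f ` T)}"
      using sub fTk by (intro card_mono) auto
    have r: "(\<rho> choose k) \<le> 3^b * ((\<rho> - card U) choose (k - card U))"
      using ratio J(2) unfolding cU by blast
    have "(\<rho> - card U) choose (k - card U) \<le> card {T\<in>Tk. Q (f ` T)}" using e m by simp
    then have "3^b * ((\<rho> - card U) choose (k - card U)) \<le> 3^b * card {T\<in>Tk. Q (f ` T)}"
      by (rule mult_le_mono2)
    then show ?thesis using r by linarith
  qed
  have "card G * (\<rho> choose k) = (\<Sum>f\<in>G. (\<rho> choose k))" by simp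
  also have "\<dots> \<le> (\<Sum>f\<in>G. 3^b * card {T\<in>Tk. Q (f ` T)})" using lb by (intro sum_mono) auto
  also have "\<dots> = 3^b * (\<Sum>f\<in>G. card {T\<in>Tk. Q (f ` T)})" by (simp add: sum_distrib_left)
  also have "\<dots> \<le> 3^b * (\<Sum>f\<in>P. card {T\<in>Tk. Q (f ` T)})"
    using fP by (intro mult_le_mono2 sum_mono2) (auto simp: G_def)
  also have "\<dots> = 3^b * ((\<rho> choose k) * (NN Q M S * card M ^ (\<rho>-k)))" using dc sumT by simp
  finally have "card G * (\<rho> choose k) \<le> (3^b * NN Q M S * card M ^ (\<rho>-k)) * (\<rho> choose k)"
    by (simp only: mult_ac)
  moreover have "(\<rho> choose k) > 0" using kr by simp
  ultimately have "card G \<le> 3^b * NN Q M S * card M ^ (\<rho>-k)" using mult_le_cancel2 by blast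
  then show ?thesis unfolding G_def P_def .
qed



lemma exp_bound:
  fixes n K j \<rho> :: nat and l :: real
  assumes "K \<le> n" "n > 0" "real K \<ge> l * real n / real \<rho>" "\<rho> > 0" "2 * j \<ge> \<rho>" "l > 0"
  shows "real (n - K) ^ j \<le> real n ^ j * exp (- l / 2)"
proof -
  define x where "x = real K / real n"
  have x0: "0 \<le> x" "x \<le> 1" using assms by (auto simp: x_def)
  have nK: "real (n - K) = real n * (1 - x)" using assms by (simp add: x_def of_nat_diff field_simps)
  have "(1 - x) ^ j \<le> exp (- x) ^ j"
    using x0 by (intro power_mono) (use exp_ge_add_one_self[of "-x"] in auto)
  also have "\<dots> = exp (- x * real j)" by (simp add: exp_of_nat_mult[symmetric] mult.commute)
  also have "\<dots> \<le> exp (- l / 2)"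
  proof -
    have "x \<ge> l / real \<rho>" using assms(3) assms(2) by (simp add: x_def field_simps)
    moreover have "real j \<ge> real \<rho> / 2" using assms(5) by linarith
    ultimately have "x * real j \<ge> (l / real \<rho>) * (real \<rho> / 2)"
      using assms x0 by (intro mult_mono) auto
    also have "(l / real \<rho>) * (real \<rho> / 2) = l / 2" using assms by simp
    finally show ?thesis by simp
  qed
  finally have "(1 - x) ^ j \<le> exp (- l / 2)" .
  then have "real n ^ j * (1 - x) ^ j \<le> real n ^ j * exp (- l / 2)" by (intro mult_left_mono) auto
  then show ?thesis by (simp add: nK power_mult_distrib)
qed




lemma def_card_le:
  assumes "comb_dim H CD b" "is_defining_set H CD \<sigma> J"
  shows "card J \<le> b"
proof -
  have J: "J \<subseteq> H" "\<sigma> \<in> CD J" and mn: "\<forall>J'. J' \<subseteq> H \<and> \<sigma> \<in> CD J' \<longrightarrow> card J \<le> card J'"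
    using assms(2) unfolding is_defining_set_def by auto
  have "has_dim_bound H CD b" using assms(1) comb_dim_def by blast
  then obtain J'' where J'': "J'' \<subseteq> J" "card J'' \<le> b" "\<sigma> \<in> CD J''"
    using J unfolding has_dim_bound_def by blast
  have "J'' \<subseteq> H" using J''(1) J(1) by blast
  then have "card J \<le> card J''" using mn J''(3) by blast
  then show ?thesis using J''(2) by linarith
qed

lemma cell_count_conv:
  assumes "complies_CS H CD D"
  shows "{g \<in> PiE T (\<lambda>_. H). \<sigma> \<in> CD (g ` T)} =
         {g \<in> PiE T (\<lambda>_. H - conflict_list H CD D \<sigma>). (\<exists>J. is_defining_set H CD \<sigma> J \<and> J \<subseteq> g ` T)}"
proof -
  have c1: "\<And>R. R \<subseteq> H \<Longrightarrow> \<sigma> \<in> CD R \<Longrightarrow> (\<exists>J. is_defining_set H CD \<sigma> J \<and> J \<subseteq> R) \<and> conflict_list H CD D \<sigma> \<inter> R = {}"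
    using assms unfolding complies_CS_def by blast
  have c2: "\<And>R. R \<subseteq> H \<Longrightarrow> (\<exists>J. is_defining_set H CD \<sigma> J \<and> J \<subseteq> R) \<Longrightarrow> conflict_list H CD D \<sigma> \<inter> R = {} \<Longrightarrow> \<sigma> \<in> CD R"
    using assms unfolding complies_CS_def by blast
  have pi: "g \<in> PiE T (\<lambda>_. H - conflict_list H CD D \<sigma>) \<longleftrightarrow>
            g \<in> PiE T (\<lambda>_. H) \<and> conflict_list H CD D \<sigma> \<inter> g ` T = {}" for g
    by (auto simp: PiE_iff)
  have sub: "g \<in> PiE T (\<lambda>_. H) \<Longrightarrow> g ` T \<subseteq> H" for g
    by (auto simp: PiE_iff)
  show ?thesis
  proof (intro set_eqI)
    fix g
    show "g \<in> {g \<in> PiE T (\<lambda>_. H). \<sigma> \<in> CD (g ` T)} \<longleftrightarrow>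
          g \<in> {g \<in> PiE T (\<lambda>_. H - conflict_list H CD D \<sigma>). (\<exists>J. is_defining_set H CD \<sigma> J \<and> J \<subseteq> g ` T)}"
      unfolding mem_Collect_eq pi using c1[OF sub] c2[OF sub] by meson
  qed
qed

theorem mainTheorem2:
  fixes H :: "'h set" and CD :: "'h set \<Rightarrow> 'c set" and D :: "'c \<Rightarrow> 'h set"
    and b \<rho> :: nat and \<alpha> \<beta> l :: real
  assumes "finite H" and "H \<noteq> {}"
    and "comb_dim H CD b"
    and "valid_defining_choice H CD D"
    and "complies_CS H CD D"
    and "\<forall>I. I \<subseteq> H \<longrightarrow> finite (CD I)"
    and "\<forall>m \<le> card H. real (local_growth H CD m) \<le> 2 powr \<alpha> * real m powr \<beta>"
    and "\<beta> \<ge> 1"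
    and "real \<rho> \<ge> 4 * real b"
    and "l > 1"
  shows "measure_pmf.expectation (rho_sample H \<rho>) (\<lambda>R. real (card (heavy_cells H CD D \<rho> l R)))
           \<le> 3 ^ b * 2 powr (\<alpha> - \<beta>) * real \<rho> powr \<beta> * exp (- l / 2)"
proof -
  note fH = assms(1)
  define n where "n = card H"
  have n0: "n > 0" using assms(1,2) n_def by (simp add: card_gt_0_iff)
  have b0: "b > 0" using assms(3) unfolding comb_dim_def has_dim_bound_def by blast
  have b4: "4 * b \<le> \<rho>" using assms(9) by linarith
  define k where "k = \<rho> div 2"
  define I where "I = {0..<\<rho>}"
  define S where "S = {0..<k}"
  define K where "K = conflict_list H CD D"
  define Q where "Q = (\<lambda>\<sigma> R. \<exists>J. is_defining_set H CD \<sigma> J \<and> J \<subseteq> R)"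
  define C where "C = \<Union> (CD ` Pow H)"
  define Ch where "Ch = {\<sigma>\<in>C. l * real n / real \<rho> \<le> real (card (K \<sigma>))}"
  define hv where "hv = (\<lambda>R. real (card (heavy_cells H CD D \<rho> l R)))"
  have fC: "finite C" unfolding C_def using assms(1,6) by auto
  have fCh: "finite Ch" unfolding Ch_def using fC by simp
  have fI: "finite I" "card I = \<rho>" unfolding I_def by auto
  have fS: "finite S" "card S = k" unfolding S_def by auto
  have kr: "k \<le> \<rho>" "b \<le> k" "\<rho> > 0" using b4 b0 unfolding k_def by auto
  have r2: "2 * (\<rho> - k) \<ge> \<rho>" unfolding k_def by auto
  define L where "L = {xs. set xs \<subseteq> H \<and> length xs = \<rho>}"
  have fL: "finite L" "L \<noteq> {}" "card L = n ^ \<rho>"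
  proof -
    show "finite L" unfolding L_def using fH by (simp add: finite_lists_length_eq)
    obtain h where "h \<in> H" using assms(2) by auto
    then have "replicate \<rho> h \<in> L" unfolding L_def by auto
    then show "L \<noteq> {}" by blast
    show "card L = n ^ \<rho>" unfolding L_def n_def using fH by (simp add: card_lists_length_eq)
  qed
  have E1: "measure_pmf.expectation (rho_sample H \<rho>) hv = (\<Sum>xs\<in>L. hv (set xs)) / real (n ^ \<rho>)"
    unfolding rho_sample_def rep_pmf_of_set[OF assms(1,2)] L_def[symmetric]
    using fL by (simp add: integral_pmf_of_set)
  have E2: "(\<Sum>xs\<in>L. hv (set xs)) = (\<Sum>f\<in>PiE I (\<lambda>_. H). hv (f ` I))"
  proof (rule sum.reindex_bij_witness[where i="\<lambda>f. map f [0..<\<rho>]" and j="\<lambda>xs. restrict (nth xs) I"])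
    fix f assume f: "f \<in> PiE I (\<lambda>_. H)"
    show "restrict ((!) (map f [0..<\<rho>])) I = f"
      using f by (auto simp: I_def PiE_iff extensional_def fun_eq_iff)
    show "map f [0..<\<rho>] \<in> L" using f by (auto simp: I_def L_def PiE_iff)
  next
    fix xs assume xs: "xs \<in> L"
    show "map (restrict ((!) xs) I) [0..<\<rho>] = xs" using xs
      by (auto simp: I_def L_def intro: nth_equalityI)
    show "restrict ((!) xs) I \<in> PiE I (\<lambda>_. H)" using xs by (auto simp: I_def L_def PiE_iff)
    have "restrict ((!) xs) I ` I = set xs" using xs by (auto simp: I_def L_def set_conv_nth)
    then show "hv (restrict ((!) xs) I ` I) = hv (set xs)" by simp
  qed
  have fPI: "finite (PiE I (\<lambda>_. H))" using fI fH by (simp add: finite_PiE)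
  have fPS: "finite (PiE S (\<lambda>_. H))" using fS fH by (simp add: finite_PiE)
  have hvf: "hv (f ` I) = real (card {\<sigma>\<in>Ch. \<sigma> \<in> CD (f ` I)})" if "f \<in> PiE I (\<lambda>_. H)" for f
  proof -
    have "f ` I \<subseteq> H" using that by (auto simp: PiE_iff)
    then have "heavy_cells H CD D \<rho> l (f ` I) = {\<sigma>\<in>Ch. \<sigma> \<in> CD (f ` I)}"
      unfolding heavy_cells_def Ch_def C_def K_def n_def by auto
    then show ?thesis unfolding hv_def by simp
  qed
  have E3: "(\<Sum>f\<in>PiE I (\<lambda>_. H). hv (f ` I)) = real (\<Sum>\<sigma>\<in>Ch. card {f\<in>PiE I (\<lambda>_. H). \<sigma> \<in> CD (f ` I)})"
  proof -
    have "(\<Sum>f\<in>PiE I (\<lambda>_. H). hv (f ` I)) = real (\<Sum>f\<in>PiE I (\<lambda>_. H). card {\<sigma>\<in>Ch. \<sigma> \<in> CD (f ` I)})"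
      using hvf by simp
    also have "(\<Sum>f\<in>PiE I (\<lambda>_. H). card {\<sigma>\<in>Ch. \<sigma> \<in> CD (f ` I)}) = (\<Sum>\<sigma>\<in>Ch. card {f\<in>PiE I (\<lambda>_. H). \<sigma> \<in> CD (f ` I)})"
      by (rule double_count[OF fPI fCh])
    finally show ?thesis .
  qed
  have ratio: "\<forall>d\<le>b. (\<rho> choose k) \<le> 3^b * ((\<rho>-d) choose (k-d))"
  proof (intro allI impI)
    fix d assume d: "d \<le> b"
    have "(\<rho> choose k) \<le> 3 ^ d * ((\<rho> - d) choose (k - d))"
      using d kr b4 by (intro choose_ratio) (auto simp: k_def)
    also have "\<dots> \<le> 3 ^ b * ((\<rho> - d) choose (k - d))" using d by (intro mult_right_mono power_increasing) auto
    finally show "(\<rho> choose k) \<le> 3^b * ((\<rho>-d) choose (k-d))" .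
  qed
  have percell: "real (card {f\<in>PiE I (\<lambda>_. H). \<sigma> \<in> CD (f ` I)})
     \<le> 3^b * exp (- l / 2) * real n ^ (\<rho> - k) * real (card {g\<in>PiE S (\<lambda>_. H). \<sigma> \<in> CD (g ` S)})"
    if \<sigma>: "\<sigma> \<in> Ch" for \<sigma>
  proof -
    let ?M = "H - K \<sigma>"
    have fM: "finite ?M" using fH by simp
    have up: "\<forall>f\<in>PiE I (\<lambda>_. ?M). Q \<sigma> (f ` I) \<longrightarrow> (\<exists>J. J \<subseteq> f ` I \<and> card J \<le> b \<and> (\<forall>R. J \<subseteq> R \<longrightarrow> Q \<sigma> R))"
      unfolding Q_def using def_card_le[OF assms(3)] by blast
    have eqI: "card {f\<in>PiE I (\<lambda>_. H). \<sigma> \<in> CD (f ` I)} = card {f\<in>PiE I (\<lambda>_. ?M). Q \<sigma> (f ` I)}"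
      unfolding Q_def K_def by (subst cell_count_conv[OF assms(5)]) (rule refl)
    have eqS: "NN (Q \<sigma>) ?M S = card {g\<in>PiE S (\<lambda>_. H). \<sigma> \<in> CD (g ` S)}"
      unfolding Q_def K_def NN_def by (subst cell_count_conv[OF assms(5)]) (rule refl)
    have c1: "card {f\<in>PiE I (\<lambda>_. H). \<sigma> \<in> CD (f ` I)} \<le> 3^b * card {g\<in>PiE S (\<lambda>_. H). \<sigma> \<in> CD (g ` S)} * card ?M ^ (\<rho> - k)"
      using subsample[OF fI(1) fM fI(2) kr(1) up ratio kr(2) fS] eqI eqS by simp
    have KH: "K \<sigma> \<subseteq> H" unfolding K_def conflict_list_def by auto
    have cM: "card ?M = n - card (K \<sigma>)" using KH fH by (simp add: card_Diff_subset n_def finite_subset)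
    have ex: "real (card ?M) ^ (\<rho> - k) \<le> real n ^ (\<rho> - k) * exp (- l / 2)"
      unfolding cM
      by (rule exp_bound) (use \<sigma> n0 kr r2 assms(10) KH fH in \<open>auto simp: Ch_def n_def card_mono\<close>)
    then have "real (card {f\<in>PiE I (\<lambda>_. H). \<sigma> \<in> CD (f ` I)}) \<le> 3^b * real (card {g\<in>PiE S (\<lambda>_. H). \<sigma> \<in> CD (g ` S)}) * (real n ^ (\<rho> - k) * exp (- l / 2))"
    proof -
      have "real (card {f\<in>PiE I (\<lambda>_. H). \<sigma> \<in> CD (f ` I)}) \<le> real (3^b * card {g\<in>PiE S (\<lambda>_. H). \<sigma> \<in> CD (g ` S)} * card ?M ^ (\<rho> - k))"
        using c1 by (simp only: of_nat_le_iff)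
      also have "\<dots> = 3^b * real (card {g\<in>PiE S (\<lambda>_. H). \<sigma> \<in> CD (g ` S)}) * real (card ?M) ^ (\<rho> - k)"
        by simp
      also have "\<dots> \<le> 3^b * real (card {g\<in>PiE S (\<lambda>_. H). \<sigma> \<in> CD (g ` S)}) * (real n ^ (\<rho> - k) * exp (- l / 2))"
        using ex by (intro mult_left_mono) auto
      finally show ?thesis .
    qed
    then show ?thesis by (simp add: algebra_simps)
  qed
  have growth: "real (card (CD (g ` S))) \<le> 2 powr \<alpha> * real k powr \<beta>" if g: "g \<in> PiE S (\<lambda>_. H)" for g
  proof -
    have sub: "g ` S \<subseteq> H" using g by (auto simp: PiE_iff)
    have cgS: "card (g ` S) \<le> k" using card_image_le[OF fS(1)] fS(2) by simp
    have cgH: "card (g ` S) \<le> card H" using sub fH by (simp add: card_mono)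
    have fin: "finite {card (CD I) | I. I \<subseteq> H \<and> card I = card (g ` S)}"
    proof -
      have "{card (CD I) | I. I \<subseteq> H \<and> card I = card (g ` S)} \<subseteq> (\<lambda>I. card (CD I)) ` Pow H" by auto
      then show ?thesis using fH finite_subset by blast
    qed
    have "card (CD (g ` S)) \<le> local_growth H CD (card (g ` S))"
      unfolding local_growth_def using sub by (intro Max_ge[OF fin]) auto
    then have "real (card (CD (g ` S))) \<le> 2 powr \<alpha> * real (card (g ` S)) powr \<beta>"
      using assms(7) cgH by (meson of_nat_le_iff order_trans)
    also have "\<dots> \<le> 2 powr \<alpha> * real k powr \<beta>"
      using cgS assms(8) by (intro mult_left_mono powr_mono2) auto
    finally show ?thesis .
  qed
  have sumS: "real (\<Sum>\<sigma>\<in>Ch. card {g\<in>PiE S (\<lambda>_. H). \<sigma> \<in> CD (g ` S)}) \<le> real n ^ k * (2 powr \<alpha> * real k powr \<beta>)"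
  proof -
    have "(\<Sum>\<sigma>\<in>Ch. card {g\<in>PiE S (\<lambda>_. H). \<sigma> \<in> CD (g ` S)}) \<le> (\<Sum>\<sigma>\<in>C. card {g\<in>PiE S (\<lambda>_. H). \<sigma> \<in> CD (g ` S)})"
      using fC by (intro sum_mono2) (auto simp: Ch_def)
    also have "\<dots> = (\<Sum>g\<in>PiE S (\<lambda>_. H). card {\<sigma>\<in>C. \<sigma> \<in> CD (g ` S)})"
      by (rule double_count[OF fPS fC, symmetric])
    also have "\<dots> = (\<Sum>g\<in>PiE S (\<lambda>_. H). card (CD (g ` S)))"
    proof (rule sum.cong[OF refl])
      fix g assume "g \<in> PiE S (\<lambda>_. H)"
      then have "g ` S \<subseteq> H" by (auto simp: PiE_iff)
      then have "{\<sigma>\<in>C. \<sigma> \<in> CD (g ` S)} = CD (g ` S)" unfolding C_def by auto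
      then show "card {\<sigma>\<in>C. \<sigma> \<in> CD (g ` S)} = card (CD (g ` S))" by simp
    qed
    finally have "real (\<Sum>\<sigma>\<in>Ch. card {g\<in>PiE S (\<lambda>_. H). \<sigma> \<in> CD (g ` S)}) \<le> real (\<Sum>g\<in>PiE S (\<lambda>_. H). card (CD (g ` S)))"
      by (simp only: of_nat_le_iff)
    also have "\<dots> = (\<Sum>g\<in>PiE S (\<lambda>_. H). real (card (CD (g ` S))))"
      by (rule of_nat_sum)
    also have "\<dots> \<le> (\<Sum>g\<in>PiE S (\<lambda>_. H). 2 powr \<alpha> * real k powr \<beta>)" using growth by (intro sum_mono) auto
    also have "\<dots> = real n ^ k * (2 powr \<alpha> * real k powr \<beta>)"
      using fS fH by (simp add: card_PiE n_def)
    finally show ?thesis .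
  qed
  have "(\<Sum>f\<in>PiE I (\<lambda>_. H). hv (f ` I))
        \<le> (\<Sum>\<sigma>\<in>Ch. 3^b * exp (- l / 2) * real n ^ (\<rho> - k) * real (card {g\<in>PiE S (\<lambda>_. H). \<sigma> \<in> CD (g ` S)}))"
    unfolding E3 of_nat_sum using percell by (intro sum_mono) auto
  also have "\<dots> = 3^b * exp (- l / 2) * real n ^ (\<rho> - k) * real (\<Sum>\<sigma>\<in>Ch. card {g\<in>PiE S (\<lambda>_. H). \<sigma> \<in> CD (g ` S)})"
    by (simp add: sum_distrib_left)
  also have "\<dots> \<le> 3^b * exp (- l / 2) * real n ^ (\<rho> - k) * (real n ^ k * (2 powr \<alpha> * real k powr \<beta>))"
    using sumS by (intro mult_left_mono) auto
  also have "\<dots> = real n ^ \<rho> * (3^b * exp (- l / 2) * 2 powr \<alpha> * real k powr \<beta>)"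
  proof -
    have "real n ^ (\<rho> - k) * real n ^ k = real n ^ \<rho>" using kr by (simp add: power_add[symmetric])
    then show ?thesis by (simp add: algebra_simps)
  qed
  finally have tot: "(\<Sum>f\<in>PiE I (\<lambda>_. H). hv (f ` I)) \<le> real n ^ \<rho> * (3^b * exp (- l / 2) * 2 powr \<alpha> * real k powr \<beta>)" .
  have kb: "real k powr \<beta> \<le> (real \<rho> / 2) powr \<beta>"
    using assms(8) by (intro powr_mono2) (auto simp: k_def)
  have "2 powr \<alpha> * (real \<rho> / 2) powr \<beta> = 2 powr (\<alpha> - \<beta>) * real \<rho> powr \<beta>"
    by (simp add: powr_divide powr_diff)
  have "measure_pmf.expectation (rho_sample H \<rho>) hv \<le> 3^b * exp (- l / 2) * 2 powr \<alpha> * real k powr \<beta>"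
    unfolding E1 E2 using tot n0 by (simp add: divide_le_eq mult.commute)
  also have "\<dots> \<le> 3^b * exp (- l / 2) * 2 powr \<alpha> * (real \<rho> / 2) powr \<beta>"
    using kb by (intro mult_left_mono) auto
  also have "\<dots> = 3 ^ b * 2 powr (\<alpha> - \<beta>) * real \<rho> powr \<beta> * exp (- l / 2)"
    using \<open>2 powr \<alpha> * (real \<rho> / 2) powr \<beta> = 2 powr (\<alpha> - \<beta>) * real \<rho> powr \<beta>\<close> by (simp add: algebra_simps)
  finally show ?thesis unfolding hv_def .
qed

end
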